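(* Let $k, m, s$ be positive integers with $m \geq 2$, $s \leq k-2$ and $m 2^{-s} \leq 1/4$, let $n = km$, and let $\mathcal{F} \subset \mathcal{P}([n])$ be constructed as follows: partition $[n]$ into blocks $B_1,\ldots,B_m$ with $|B_i| = k$, choose $T_i \subset B_i$ with $|T_i| = s$, put $T = \bigcup_i T_i$, and let $\mathcal{F}$ be the union-closed family generated by $\{B_i \cup \{t\} : i \in [m],\ t \in T\}$. Then: (i) for every $x \in [n]\setminus T$, $\frac{1}{m} \leq \gamma_x \leq \frac{2}{m}$; (ii) for every $x \in T$, $\frac12 \leq \gamma_x \leq 1$; (iii) $\displaystyle \frac{1}{m} \leq \mathrm{AOD}(\mathcal{F}) \leq \frac{2}{m} + \frac{m^2 s}{n}$.
   Context: $[n] = \{1,\ldots,n\}$. A family of sets is union-closed if it contains the union of any two of its members; the union-closed family generated by $\mathcal{G}$ is the smallest union-closed family containing $\mathcal{G}$. For a finite nonempty family $\mathcal{F} \subset \mathcal{P}(X)$ and $x \in X$, the abundance is $\gamma_x = |\{A \in \mathcal{F} : x \in A\}|/|\mathcal{F}|$. For $\mathcal{F} \neq \emptyset,\{\emptyset\}$, the average overlap density is $\mathrm{AOD}(\mathcal{F}) = \frac{1}{|\mathcal{F}\setminus\{\emptyset\}|}\sum_{A \in \mathcal{F}\setminus\{\emptyset\}} \frac{1}{|A|}\sum_{x \in A}\gamma_x$. *)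

theory Defs
  imports Complex_Main
begin

definition union_closed :: "'a set set \<Rightarrow> bool" where
  "union_closed F \<longleftrightarrow> (\<forall>A\<in>F. \<forall>B\<in>F. A \<union> B \<in> F)"

definition uc_generated :: "'a set set \<Rightarrow> 'a set set" where
  "uc_generated G = \<Inter>{F. G \<subseteq> F \<and> union_closed F}"

definition abundance :: "'a set set \<Rightarrow> 'a \<Rightarrow> real" where
  "abundance F x = real (card {A\<in>F. x \<in> A}) / real (card F)"

definition AOD :: "'a set set \<Rightarrow> real" where
  "AOD F = (1 / real (card (F - {{}}))) *
     (\<Sum>A\<in>F - {{}}. (1 / real (card A)) * (\<Sum>x\<in>A. abundance F x))"

end

theory Submission
  imports Defs "HOL-Library.FuncSet"
begin


lemma pw1:
  fixes a b :: real
  assumes "0 \<le> b" "b \<le> a"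
  shows "a ^ Suc j - b ^ Suc j \<le> real (Suc j) * a ^ j * (a - b)"
proof (induction j)
  case 0 then show ?case by simp
next
  case (Suc j)
  have bj: "b ^ Suc j \<le> a ^ Suc j" using assms by (intro power_mono) auto
  have a0: "0 \<le> a" using assms by simp
  have "a ^ Suc (Suc j) - b ^ Suc (Suc j) = a * (a ^ Suc j - b ^ Suc j) + b ^ Suc j * (a - b)"
    by (simp add: algebra_simps)
  also have "\<dots> \<le> a * (real (Suc j) * a ^ j * (a - b)) + a ^ Suc j * (a - b)"
    using Suc a0 bj assms by (intro add_mono mult_left_mono mult_right_mono) auto
  also have "\<dots> = real (Suc (Suc j)) * a ^ Suc j * (a - b)" by (simp add: algebra_simps)
  finally show ?case .
qed

lemma bern:
  fixes q :: real
  assumes "0 \<le> q"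
  shows "q ^ j * (q + real j) \<le> q * (q + 1) ^ j"
proof (induction j)
  case 0 then show ?case by simp
next
  case (Suc j)
  have "q ^ Suc j * (q + real (Suc j)) = q ^ j * (q * q + q * real j + q)" by (simp add: algebra_simps)
  also have "\<dots> \<le> q ^ j * ((q + real j) * (q + 1))"
    using assms by (intro mult_left_mono) (auto simp: algebra_simps)
  also have "\<dots> = (q ^ j * (q + real j)) * (q + 1)" by simp
  also have "\<dots> \<le> (q * (q + 1) ^ j) * (q + 1)" using Suc assms by (intro mult_right_mono) auto
  also have "\<dots> = q * (q + 1) ^ Suc j" by simp
  finally show ?case .
qed

lemma ineqs:
  fixes q :: real and m :: nat
  assumes m2: "m \<ge> 2" and q4: "4 * real m \<le> q"
  shows "0 < (q + 1) ^ m - q ^ m"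
    and "1 / real m \<le> (q + 1) ^ (m - 1) / ((q + 1) ^ m - q ^ m)"
    and "(q + 1) ^ (m - 1) / ((q + 1) ^ m - q ^ m) \<le> 2 / real m"
proof -
  obtain j where mj: "m = Suc j" using m2 by (cases m) auto
  have q0: "0 < q" using q4 m2 by simp
  have "q ^ m < (q + 1) ^ m" using q0 mj by (intro power_strict_mono) auto
  then show Npos: "0 < (q + 1) ^ m - q ^ m" by simp
  have mpos: "0 < real m" using m2 by simp
  have a: "(q + 1) ^ m - q ^ m \<le> real m * (q + 1) ^ (m - 1)"
    using pw1[of q "q + 1" j] q0 mj by simp
  show "1 / real m \<le> (q + 1) ^ (m - 1) / ((q + 1) ^ m - q ^ m)"
    using a Npos mpos by (simp add: field_simps)
  have bj: "q ^ j * (q + real j) \<le> q * (q + 1) ^ j" using bern[of q j] q0 by simp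
  have qj: "0 < q + real j" using q0 by simp
  have key: "2 * q * q \<le> (2 * q + 1 - real j) * (q + real j)"
  proof -
    have "real j \<le> q" using q4 mj by simp
    then have "real j * real j \<le> q * real j" by (intro mult_right_mono) auto
    then show ?thesis using q0 by (simp add: algebra_simps)
  qed
  have Qj: "0 \<le> (q + 1) ^ j" using q0 by simp
  have "(q + real j) * (2 * q * q ^ j) = 2 * q * (q ^ j * (q + real j))" by (simp add: algebra_simps)
  also have "\<dots> \<le> 2 * q * (q * (q + 1) ^ j)" using bj q0 by (intro mult_left_mono) auto
  also have "\<dots> = (2 * q * q) * (q + 1) ^ j" by (simp add: algebra_simps)
  also have "\<dots> \<le> ((2 * q + 1 - real j) * (q + real j)) * (q + 1) ^ j"
    using key Qj by (rule mult_right_mono)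
  also have "\<dots> = (q + real j) * ((2 * q + 1 - real j) * (q + 1) ^ j)" by (simp add: algebra_simps)
  finally have "2 * q * q ^ j \<le> (2 * q + 1 - real j) * (q + 1) ^ j"
    using qj by (simp add: mult_le_cancel_left_pos)
  then have b: "real m * (q + 1) ^ (m - 1) \<le> 2 * ((q + 1) ^ m - q ^ m)"
    using mj by (simp add: algebra_simps)
  show "(q + 1) ^ (m - 1) / ((q + 1) ^ m - q ^ m) \<le> 2 / real m"
    using b Npos mpos by (simp add: field_simps)
qed



locale blk =
  fixes k m s n :: nat and B T :: "nat \<Rightarrow> nat set" and TT :: "nat set"
  assumes k0: "k > 0" and m2: "m \<ge> 2" and s0: "s > 0" and sk: "s + 2 \<le> k"
    and nkm: "n = k * m"
    and cardB: "\<And>i. i \<in> {1..m} \<Longrightarrow> card (B i) = k"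
    and disj: "\<And>i j. i \<in> {1..m} \<Longrightarrow> j \<in> {1..m} \<Longrightarrow> i \<noteq> j \<Longrightarrow> B i \<inter> B j = {}"
    and cover: "(\<Union>i\<in>{1..m}. B i) = {1..n}"
    and TB: "\<And>i. i \<in> {1..m} \<Longrightarrow> T i \<subseteq> B i"
    and cardT: "\<And>i. i \<in> {1..m} \<Longrightarrow> card (T i) = s"
    and TTdef: "TT = (\<Union>i\<in>{1..m}. T i)"
begin

lemma finB: "i \<in> {1..m} \<Longrightarrow> finite (B i)"
  using cardB[of i] k0 card.infinite by fastforce
lemma finT: "i \<in> {1..m} \<Longrightarrow> finite (T i)"
  using finB TB finite_subset by blast
lemma T_ne: "i \<in> {1..m} \<Longrightarrow> T i \<noteq> {}"
  using cardT[of i] s0 by force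
lemma B_not_T: "i \<in> {1..m} \<Longrightarrow> \<not> B i \<subseteq> T i"
proof
  assume i: "i \<in> {1..m}" and "B i \<subseteq> T i"
  then have "card (B i) \<le> card (T i)" using finT card_mono by blast
  then show False using cardB[OF i] cardT[OF i] sk by simp
qed
lemma B_sub: "i \<in> {1..m} \<Longrightarrow> B i \<subseteq> {1..n}"
  using cover by blast
lemma uniq: "i \<in> {1..m} \<Longrightarrow> j \<in> {1..m} \<Longrightarrow> x \<in> B i \<Longrightarrow> x \<in> B j \<Longrightarrow> i = j"
  using disj by blast
lemma TT_sub: "TT \<subseteq> {1..n}"
  using TTdef TB B_sub by blast
lemma card_TT: "card TT \<le> m * s"
proof -
  have "card TT \<le> (\<Sum>i\<in>{1..m}. card (T i))" unfolding TTdef by (rule card_UN_le) simp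
  also have "\<dots> = m * s" using cardT by simp
  finally show ?thesis .
qed

lemma card_prod:
  assumes C: "\<And>i. i \<in> {1..m} \<Longrightarrow> C i \<subseteq> Pow (B i)"
  shows "card {A. A \<subseteq> {1..n} \<and> (\<forall>i\<in>{1..m}. A \<inter> B i \<in> C i)} = (\<Prod>i\<in>{1..m}. card (C i))"
proof -
  let ?S = "{A. A \<subseteq> {1..n} \<and> (\<forall>i\<in>{1..m}. A \<inter> B i \<in> C i)}"
  have "bij_betw (\<lambda>A. restrict (\<lambda>i. A \<inter> B i) {1..m}) ?S (PiE {1..m} C)"
  proof (rule bij_betw_byWitness[where f'="\<lambda>f. \<Union>i\<in>{1..m}. f i"])
    show "\<forall>A\<in>?S. (\<Union>i\<in>{1..m}. restrict (\<lambda>i. A \<inter> B i) {1..m} i) = A"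
    proof
      fix A assume "A \<in> ?S"
      then have "A \<subseteq> (\<Union>i\<in>{1..m}. B i)" using cover by simp
      then show "(\<Union>i\<in>{1..m}. restrict (\<lambda>i. A \<inter> B i) {1..m} i) = A" by auto
    qed
    show "\<forall>f\<in>PiE {1..m} C. restrict (\<lambda>i. (\<Union>j\<in>{1..m}. f j) \<inter> B i) {1..m} = f"
    proof
      fix f assume f: "f \<in> PiE {1..m} C"
      have fi: "f i \<subseteq> B i" if "i \<in> {1..m}" for i using PiE_mem[OF f that] C[OF that] by blast
      show "restrict (\<lambda>i. (\<Union>j\<in>{1..m}. f j) \<inter> B i) {1..m} = f"
      proof
        fix i show "restrict (\<lambda>i. (\<Union>j\<in>{1..m}. f j) \<inter> B i) {1..m} i = f i"
        proof (cases "i \<in> {1..m}")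
          case True
          have "(\<Union>j\<in>{1..m}. f j) \<inter> B i = f i"
          proof
            show "(\<Union>j\<in>{1..m}. f j) \<inter> B i \<subseteq> f i"
            proof
              fix x assume "x \<in> (\<Union>j\<in>{1..m}. f j) \<inter> B i"
              then obtain j where j: "j \<in> {1..m}" "x \<in> f j" "x \<in> B i" by blast
              then have "x \<in> B j" using fi by blast
              then have "j = i" using uniq[OF j(1) True] j by blast
              then show "x \<in> f i" using j by simp
            qed
            show "f i \<subseteq> (\<Union>j\<in>{1..m}. f j) \<inter> B i" using fi True by blast
          qed
          then show ?thesis using True by simp
        next
          case False then show ?thesis using PiE_arb[OF f False] False unfolding restrict_def by auto
        qed
      qed
    qed
    show "(\<lambda>A. restrict (\<lambda>i. A \<inter> B i) {1..m}) ` ?S \<subseteq> PiE {1..m} C"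
    proof
      fix g assume "g \<in> (\<lambda>A. restrict (\<lambda>i. A \<inter> B i) {1..m}) ` ?S"
      then obtain A where A: "A \<in> ?S" "g = restrict (\<lambda>i. A \<inter> B i) {1..m}" by blast
      have "\<forall>i\<in>{1..m}. A \<inter> B i \<in> C i" using A(1) by blast
      then show "g \<in> PiE {1..m} C" unfolding A(2) by (simp add: restrict_PiE_iff)
    qed
    show "(\<lambda>f. \<Union>i\<in>{1..m}. f i) ` PiE {1..m} C \<subseteq> ?S"
    proof
      fix A assume "A \<in> (\<lambda>f. \<Union>i\<in>{1..m}. f i) ` PiE {1..m} C"
      then obtain f where f: "f \<in> PiE {1..m} C" and A: "A = (\<Union>i\<in>{1..m}. f i)" by auto
      have fi: "f i \<subseteq> B i" if "i \<in> {1..m}" for i using PiE_mem[OF f that] C[OF that] by blast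
      have "A \<subseteq> {1..n}" unfolding A using fi B_sub by (meson UN_least order_trans)
      moreover have "A \<inter> B i \<in> C i" if i: "i \<in> {1..m}" for i
      proof -
        have "A \<inter> B i = f i"
        proof
          show "A \<inter> B i \<subseteq> f i"
          proof
            fix x assume "x \<in> A \<inter> B i"
            then obtain j where j: "j \<in> {1..m}" "x \<in> f j" "x \<in> B i" unfolding A by blast
            then have "x \<in> B j" using fi by blast
            then have "j = i" using uniq[OF j(1) i] j by blast
            then show "x \<in> f i" using j by simp
          qed
          show "f i \<subseteq> A \<inter> B i" unfolding A using fi i by blast
        qed
        then show ?thesis using f i by auto
      qed
      ultimately show "A \<in> ?S" by blast
    qed
  qed
  then have "card ?S = card (PiE {1..m} C)" by (rule bij_betw_same_card)
  also have "\<dots> = (\<Prod>i\<in>{1..m}. card (C i))" by (simp add: card_PiE)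
  finally show ?thesis .
qed


definition Fc :: "nat set set" where
  "Fc = {A. A \<subseteq> {1..n} \<and> (\<forall>i\<in>{1..m}. A \<inter> B i = B i \<or> A \<inter> B i \<subseteq> T i) \<and> (\<exists>i\<in>{1..m}. B i \<subseteq> A)}"

lemma Gen_Fc: "{B i \<union> {t} | i t. i \<in> {1..m} \<and> t \<in> TT} \<subseteq> Fc"
proof
  fix A assume "A \<in> {B i \<union> {t} | i t. i \<in> {1..m} \<and> t \<in> TT}"
  then obtain i t where i: "i \<in> {1..m}" and t: "t \<in> TT" and A: "A = B i \<union> {t}" by blast
  from t obtain l where l: "l \<in> {1..m}" "t \<in> T l" using TTdef by blast
  have "A \<subseteq> {1..n}" using B_sub[OF i] TT_sub t A by blast
  moreover have "\<forall>p\<in>{1..m}. A \<inter> B p = B p \<or> A \<inter> B p \<subseteq> T p"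
  proof
    fix p assume p: "p \<in> {1..m}"
    show "A \<inter> B p = B p \<or> A \<inter> B p \<subseteq> T p"
    proof (cases "p = i")
      case True then show ?thesis using A by blast
    next
      case False
      have "A \<inter> B p \<subseteq> T p"
      proof
        fix x assume x: "x \<in> A \<inter> B p"
        have "x \<notin> B i" using x disj[OF i p] False by blast
        then have xt: "x = t" using A x by blast
        then have "x \<in> B l" using TB[OF l(1)] l(2) by blast
        then have "l = p" using uniq[OF l(1) p] x by blast
        then show "x \<in> T p" using l xt by simp
      qed
      then show ?thesis by blast
    qed
  qed
  moreover have "\<exists>i\<in>{1..m}. B i \<subseteq> A" using i A by blast
  ultimately show "A \<in> Fc" unfolding Fc_def by blast
qed

lemma Fc_uc: "union_closed Fc"
  unfolding union_closed_def
proof (intro ballI)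
  fix A C assume A: "A \<in> Fc" and C: "C \<in> Fc"
  have "A \<union> C \<subseteq> {1..n}" using A C unfolding Fc_def by blast
  moreover have "\<forall>i\<in>{1..m}. (A \<union> C) \<inter> B i = B i \<or> (A \<union> C) \<inter> B i \<subseteq> T i"
  proof
    fix i assume i: "i \<in> {1..m}"
    have a: "A \<inter> B i = B i \<or> A \<inter> B i \<subseteq> T i" using A i unfolding Fc_def by blast
    have c: "C \<inter> B i = B i \<or> C \<inter> B i \<subseteq> T i" using C i unfolding Fc_def by blast
    show "(A \<union> C) \<inter> B i = B i \<or> (A \<union> C) \<inter> B i \<subseteq> T i"
      using a c by blast
  qed
  moreover have "\<exists>i\<in>{1..m}. B i \<subseteq> A \<union> C" using A unfolding Fc_def by blast
  ultimately show "A \<union> C \<in> Fc" unfolding Fc_def by blast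
qed

lemma union_fin:
  assumes "union_closed F'" "finite S" "S \<noteq> {}" "S \<subseteq> F'"
  shows "\<Union>S \<in> F'"
  using assms(2,3,4)
proof (induction S rule: finite_ne_induct)
  case (singleton x) then show ?case by simp
next
  case (insert x F) then show ?case using assms(1) unfolding union_closed_def by simp
qed

lemma uc_least: "G \<subseteq> F' \<Longrightarrow> union_closed F' \<Longrightarrow> uc_generated G \<subseteq> F'"
  unfolding uc_generated_def by (rule Inter_lower) simp

lemma Fc_sub: "Fc \<subseteq> uc_generated {B i \<union> {t} | i t. i \<in> {1..m} \<and> t \<in> TT}"
proof
  fix A assume A: "A \<in> Fc"
  let ?G = "{B i \<union> {t} | i t. i \<in> {1..m} \<and> t \<in> TT}"
  have genI: "B i \<union> {t} \<in> ?G" if "i \<in> {1..m}" "t \<in> TT" for i t using that by blast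
  have Asub: "A \<subseteq> {1..n}" and Ablk: "\<forall>i\<in>{1..m}. A \<inter> B i = B i \<or> A \<inter> B i \<subseteq> T i"
    and Aex: "\<exists>i\<in>{1..m}. B i \<subseteq> A" using A unfolding Fc_def by auto
  obtain i0 where i0: "i0 \<in> {1..m}" "B i0 \<subseteq> A" using Aex by blast
  let ?S = "{g \<in> ?G. g \<subseteq> A}"
  have memS: "g \<in> ?S" if "g \<in> ?G" "g \<subseteq> A" for g using that by simp
  have GP: "?G \<subseteq> Pow {1..n}"
  proof
    fix g assume "g \<in> ?G"
    then obtain i t where "i \<in> {1..m}" "t \<in> TT" "g = B i \<union> {t}" by blast
    then show "g \<in> Pow {1..n}" using B_sub TT_sub by blast
  qed
  have "?S \<subseteq> Pow {1..n}" using GP by blast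
  then have fin: "finite ?S" by (rule finite_subset) simp
  obtain t0 where t0: "t0 \<in> T i0" using T_ne[OF i0(1)] by blast
  have t0T: "t0 \<in> TT" using t0 i0(1) TTdef by blast
  have "B i0 \<union> {t0} \<subseteq> A" using t0 TB[OF i0(1)] i0(2) by blast
  then have "B i0 \<union> {t0} \<in> ?S" by (rule memS[OF genI[OF i0(1) t0T]])
  then have ne: "?S \<noteq> {}" by blast
  have eq: "\<Union>?S = A"
  proof
    show "\<Union>?S \<subseteq> A" by blast
    show "A \<subseteq> \<Union>?S"
    proof
      fix y assume y: "y \<in> A"
      then have "y \<in> (\<Union>i\<in>{1..m}. B i)" using Asub cover by blast
      then obtain p where p: "p \<in> {1..m}" "y \<in> B p" by blast
      have "A \<inter> B p = B p \<or> A \<inter> B p \<subseteq> T p" using Ablk p(1) by blast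
      then show "y \<in> \<Union>?S"
      proof
        assume full: "A \<inter> B p = B p"
        obtain tp where tp: "tp \<in> T p" using T_ne[OF p(1)] by blast
        have tpT: "tp \<in> TT" using tp p(1) TTdef by blast
        have "B p \<union> {tp} \<subseteq> A" using tp TB[OF p(1)] full by blast
        then have g: "B p \<union> {tp} \<in> ?S" by (rule memS[OF genI[OF p(1) tpT]])
        have "y \<in> B p \<union> {tp}" using p(2) by simp
        then show ?thesis using g by (rule UnionI[rotated])
      next
        assume "A \<inter> B p \<subseteq> T p"
        then have yT: "y \<in> T p" using y p by blast
        then have yTT: "y \<in> TT" using p(1) TTdef by blast
        have "B i0 \<union> {y} \<subseteq> A" using i0(2) y by blast
        then have g: "B i0 \<union> {y} \<in> ?S" by (rule memS[OF genI[OF i0(1) yTT]])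
        have "y \<in> B i0 \<union> {y}" by simp
        then show ?thesis using g by (rule UnionI[rotated])
      qed
    qed
  qed
  show "A \<in> uc_generated ?G"
    unfolding uc_generated_def
  proof (rule InterI)
    fix F' assume "F' \<in> {F. ?G \<subseteq> F \<and> union_closed F}"
    then have G1: "?G \<subseteq> F'" and G2: "union_closed F'" by auto
    have "?S \<subseteq> F'" using G1 by blast
    then have "\<Union>?S \<in> F'" by (rule union_fin[OF G2 fin ne])
    then show "A \<in> F'" using eq by simp
  qed
qed

lemma F_eq: "uc_generated {B i \<union> {t} | i t. i \<in> {1..m} \<and> t \<in> TT} = Fc"
proof
  show "uc_generated {B i \<union> {t} | i t. i \<in> {1..m} \<and> t \<in> TT} \<subseteq> Fc"
    by (rule uc_least[OF Gen_Fc Fc_uc])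
  show "Fc \<subseteq> uc_generated {B i \<union> {t} | i t. i \<in> {1..m} \<and> t \<in> TT}" by (rule Fc_sub)
qed


lemma Fc_fin: "finite Fc"
proof -
  have "Fc \<subseteq> Pow {1..n}" unfolding Fc_def by blast
  then show ?thesis by (rule finite_subset) simp
qed

lemma card_ins: "i \<in> {1..m} \<Longrightarrow> card (insert (B i) (Pow (T i))) = Suc (2 ^ s)"
proof -
  assume i: "i \<in> {1..m}"
  have "B i \<notin> Pow (T i)" using B_not_T[OF i] by simp
  then have "card (insert (B i) (Pow (T i))) = Suc (card (Pow (T i)))"
    using finT[OF i] by simp
  also have "card (Pow (T i)) = 2 ^ s" using finT[OF i] cardT[OF i] by (simp add: card_Pow)
  finally show ?thesis .
qed

definition GG :: "nat set set" where
  "GG = {A. A \<subseteq> {1..n} \<and> (\<forall>i\<in>{1..m}. A \<inter> B i \<in> insert (B i) (Pow (T i)))}"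
definition HH :: "nat set set" where
  "HH = {A. A \<subseteq> {1..n} \<and> (\<forall>i\<in>{1..m}. A \<inter> B i \<in> Pow (T i))}"

lemma card_GG: "card GG = Suc (2 ^ s) ^ m"
proof -
  have "card GG = (\<Prod>i\<in>{1..m}. card (insert (B i) (Pow (T i))))"
    unfolding GG_def by (rule card_prod) (use TB in blast)
  also have "\<dots> = (\<Prod>i\<in>{1..m}. Suc (2 ^ s))" by (rule prod.cong) (simp_all add: card_ins)
  finally show ?thesis by simp
qed

lemma card_HH: "card HH = (2 ^ s) ^ m"
proof -
  have "card HH = (\<Prod>i\<in>{1..m}. card (Pow (T i)))"
    unfolding HH_def by (rule card_prod) (use TB in blast)
  also have "\<dots> = (\<Prod>i\<in>{1..m}. 2 ^ s)" by (rule prod.cong) (simp_all add: card_Pow finT cardT)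
  finally show ?thesis by simp
qed

lemma Fc_GH: "Fc = GG - HH" and HH_GG: "HH \<subseteq> GG"
proof -
  show "HH \<subseteq> GG" unfolding HH_def GG_def by blast
  show "Fc = GG - HH"
  proof
    show "Fc \<subseteq> GG - HH"
    proof
      fix A assume A: "A \<in> Fc"
      have Asub: "A \<subseteq> {1..n}" and Ablk: "\<forall>i\<in>{1..m}. A \<inter> B i = B i \<or> A \<inter> B i \<subseteq> T i"
        and Aex: "\<exists>i\<in>{1..m}. B i \<subseteq> A" using A unfolding Fc_def by auto
      have "A \<in> GG" unfolding GG_def using Asub Ablk by auto
      moreover have "A \<notin> HH"
      proof
        assume "A \<in> HH"
        then have h: "\<forall>i\<in>{1..m}. A \<inter> B i \<subseteq> T i" unfolding HH_def by auto
        obtain i where i: "i \<in> {1..m}" "B i \<subseteq> A" using Aex by blast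
        then have "B i \<subseteq> T i" using h by blast
        then show False using B_not_T[OF i(1)] by simp
      qed
      ultimately show "A \<in> GG - HH" by simp
    qed
    show "GG - HH \<subseteq> Fc"
    proof
      fix A assume A: "A \<in> GG - HH"
      then have Asub: "A \<subseteq> {1..n}" and Ablk: "\<forall>i\<in>{1..m}. A \<inter> B i \<in> insert (B i) (Pow (T i))"
        and nH: "\<not> (\<forall>i\<in>{1..m}. A \<inter> B i \<in> Pow (T i))" unfolding GG_def HH_def by auto
      have "\<forall>i\<in>{1..m}. A \<inter> B i = B i \<or> A \<inter> B i \<subseteq> T i" using Ablk by auto
      moreover have "\<exists>i\<in>{1..m}. B i \<subseteq> A"
      proof -
        obtain i where i: "i \<in> {1..m}" "A \<inter> B i \<notin> Pow (T i)" using nH by blast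
        then have "A \<inter> B i = B i" using Ablk by blast
        then show ?thesis using i(1) by blast
      qed
      ultimately show "A \<in> Fc" unfolding Fc_def using Asub by blast
    qed
  qed
qed

lemma card_Fc: "card Fc + (2 ^ s) ^ m = Suc (2 ^ s) ^ m"
proof -
  have "finite GG" unfolding GG_def by (rule finite_subset[of _ "Pow {1..n}"]) auto
  then have "card (GG - HH) = card GG - card HH" using HH_GG by (simp add: card_Diff_subset finite_subset)
  moreover have "card HH \<le> card GG" using HH_GG \<open>finite GG\<close> by (rule card_mono[rotated])
  ultimately show ?thesis using Fc_GH card_GG card_HH by simp
qed

lemma count_nonT:
  assumes x: "x \<in> {1..n}" "x \<notin> TT"
  shows "card {A \<in> Fc. x \<in> A} = Suc (2 ^ s) ^ (m - 1)"
proof -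
  obtain j where j: "j \<in> {1..m}" "x \<in> B j" using x(1) cover by blast
  have xT: "x \<notin> T j" using x(2) j(1) TTdef by blast
  let ?C = "\<lambda>i. if i = j then {B j} else insert (B i) (Pow (T i))"
  have eq: "{A \<in> Fc. x \<in> A} = {A. A \<subseteq> {1..n} \<and> (\<forall>i\<in>{1..m}. A \<inter> B i \<in> ?C i)}"
  proof
    show "{A \<in> Fc. x \<in> A} \<subseteq> {A. A \<subseteq> {1..n} \<and> (\<forall>i\<in>{1..m}. A \<inter> B i \<in> ?C i)}"
    proof
      fix A assume A: "A \<in> {A \<in> Fc. x \<in> A}"
      have Asub: "A \<subseteq> {1..n}" and Ablk: "\<forall>i\<in>{1..m}. A \<inter> B i = B i \<or> A \<inter> B i \<subseteq> T i"
        and xA: "x \<in> A" using A unfolding Fc_def by auto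
      have "A \<inter> B j = B j" using Ablk j xA xT by blast
      then have "\<forall>i\<in>{1..m}. A \<inter> B i \<in> ?C i" using Ablk by auto
      then show "A \<in> {A. A \<subseteq> {1..n} \<and> (\<forall>i\<in>{1..m}. A \<inter> B i \<in> ?C i)}" using Asub by blast
    qed
    show "{A. A \<subseteq> {1..n} \<and> (\<forall>i\<in>{1..m}. A \<inter> B i \<in> ?C i)} \<subseteq> {A \<in> Fc. x \<in> A}"
    proof
      fix A assume A: "A \<in> {A. A \<subseteq> {1..n} \<and> (\<forall>i\<in>{1..m}. A \<inter> B i \<in> ?C i)}"
      then have Asub: "A \<subseteq> {1..n}" and Ac: "\<forall>i\<in>{1..m}. A \<inter> B i \<in> ?C i" by auto
      have "A \<inter> B j \<in> ?C j" using Ac j(1) by blast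
      then have Aj: "A \<inter> B j = B j" by simp
      have "\<forall>i\<in>{1..m}. A \<inter> B i = B i \<or> A \<inter> B i \<subseteq> T i"
      proof
        fix i assume i: "i \<in> {1..m}"
        show "A \<inter> B i = B i \<or> A \<inter> B i \<subseteq> T i"
        proof (cases "i = j")
          case True then show ?thesis using Aj by simp
        next
          case False
          have "A \<inter> B i \<in> ?C i" using Ac i by blast
          then have "A \<inter> B i \<in> insert (B i) (Pow (T i))" using False by simp
          then show ?thesis by blast
        qed
      qed
      moreover have "B j \<subseteq> A" using Aj by blast
      ultimately have "A \<in> Fc" unfolding Fc_def using Asub j(1) by blast
      moreover have "x \<in> A" using Aj j(2) by blast
      ultimately show "A \<in> {A \<in> Fc. x \<in> A}" by simp
    qed
  qed
  have "card {A \<in> Fc. x \<in> A} = (\<Prod>i\<in>{1..m}. card (?C i))"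
    unfolding eq by (rule card_prod) (use TB in auto)
  also have "\<dots> = (\<Prod>i\<in>{1..m}. if i = j then 1 else Suc (2 ^ s))"
    by (rule prod.cong) (simp_all add: card_ins)
  also have "\<dots> = (\<Prod>i\<in>{1..m} - {j}. if i = j then 1 else Suc (2 ^ s))"
    using prod.remove[of "{1..m}" j "\<lambda>i. if i = j then 1 else Suc (2 ^ s)"] j(1) by simp
  also have "\<dots> = (\<Prod>i\<in>{1..m} - {j}. Suc (2 ^ s))" by (rule prod.cong) auto
  also have "\<dots> = Suc (2 ^ s) ^ (m - 1)" using j(1) by simp
  finally show ?thesis .
qed

lemma count_T:
  assumes x: "x \<in> TT"
  shows "card {A \<in> Fc. x \<notin> A} \<le> card {A \<in> Fc. x \<in> A}"
proof -
  obtain j where j: "j \<in> {1..m}" "x \<in> T j" using x TTdef by blast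
  have xB: "x \<in> B j" using j TB by blast
  have "inj_on (insert x) {A \<in> Fc. x \<notin> A}"
  proof (rule inj_onI)
    fix a b assume "a \<in> {A \<in> Fc. x \<notin> A}" "b \<in> {A \<in> Fc. x \<notin> A}" "insert x a = insert x b"
    then show "a = b" by (metis (no_types, lifting) Diff_insert_absorb mem_Collect_eq)
  qed
  moreover have "insert x ` {A \<in> Fc. x \<notin> A} \<subseteq> {A \<in> Fc. x \<in> A}"
  proof
    fix A' assume "A' \<in> insert x ` {A \<in> Fc. x \<notin> A}"
    then obtain A where A: "A \<in> Fc" and A': "A' = insert x A" by blast
    have Asub: "A \<subseteq> {1..n}" and Ablk: "\<forall>i\<in>{1..m}. A \<inter> B i = B i \<or> A \<inter> B i \<subseteq> T i"
      and Aex: "\<exists>i\<in>{1..m}. B i \<subseteq> A" using A unfolding Fc_def by auto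
    have "A' \<subseteq> {1..n}" using Asub A' x TT_sub by blast
    moreover have "\<forall>i\<in>{1..m}. A' \<inter> B i = B i \<or> A' \<inter> B i \<subseteq> T i"
    proof
      fix i assume i: "i \<in> {1..m}"
      show "A' \<inter> B i = B i \<or> A' \<inter> B i \<subseteq> T i"
      proof (cases "i = j")
        case True
        have "A \<inter> B j = B j \<or> A \<inter> B j \<subseteq> T j" using Ablk j(1) by blast
        then show ?thesis using True A' xB j(2) by blast
      next
        case False
        have "x \<notin> B i" using uniq[OF i j(1)] xB False by blast
        then have "A' \<inter> B i = A \<inter> B i" using A' by blast
        then show ?thesis using Ablk i by simp
      qed
    qed
    moreover have "\<exists>i\<in>{1..m}. B i \<subseteq> A'" using Aex A' by blast
    ultimately have "A' \<in> Fc" unfolding Fc_def by blast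
    then show "A' \<in> {A \<in> Fc. x \<in> A}" using A' by simp
  qed
  moreover have "finite {A \<in> Fc. x \<in> A}" using Fc_fin by simp
  ultimately show ?thesis by (rule card_inj_on_le)
qed

end

theorem mainTheorem3:
  fixes k m s n :: nat
    and B T :: "nat \<Rightarrow> nat set"
    and TT :: "nat set"
    and F :: "nat set set"
  assumes "k > 0" and "m \<ge> 2" and "s > 0" and "s + 2 \<le> k"
    and "real m / 2 ^ s \<le> 1 / 4"
    and "n = k * m"
    and "\<And>i. i \<in> {1..m} \<Longrightarrow> card (B i) = k"
    and "\<And>i j. i \<in> {1..m} \<Longrightarrow> j \<in> {1..m} \<Longrightarrow> i \<noteq> j \<Longrightarrow> B i \<inter> B j = {}"
    and "(\<Union>i\<in>{1..m}. B i) = {1..n}"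
    and "\<And>i. i \<in> {1..m} \<Longrightarrow> T i \<subseteq> B i"
    and "\<And>i. i \<in> {1..m} \<Longrightarrow> card (T i) = s"
    and "TT = (\<Union>i\<in>{1..m}. T i)"
    and "F = uc_generated {B i \<union> {t} | i t. i \<in> {1..m} \<and> t \<in> TT}"
  shows "(\<forall>x\<in>{1..n} - TT. 1 / real m \<le> abundance F x \<and> abundance F x \<le> 2 / real m)
       \<and> (\<forall>x\<in>TT. 1 / 2 \<le> abundance F x \<and> abundance F x \<le> 1)
       \<and> (1 / real m \<le> AOD F \<and>
          AOD F \<le> 2 / real m + real m ^ 2 * real s / real n)"
proof -
  interpret blk k m s n B T TT
    by (unfold_locales) (fact assms)+
  have FF: "F = Fc" using assms(13) F_eq by simp
  define q :: real where "q = 2 ^ s"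
  have q4: "4 * real m \<le> q" using assms(5) unfolding q_def by (simp add: field_simps)
  have "real (card Fc + (2 ^ s) ^ m) = real (Suc (2 ^ s) ^ m)" using card_Fc by simp
  then have cardF: "real (card F) = (q + 1) ^ m - q ^ m" unfolding FF q_def by (simp add: algebra_simps)
  note I = ineqs[OF assms(2) q4]
  have Npos: "0 < real (card F)" using cardF I(1) by simp
  have mpos: "0 < real m" using assms(2) by simp
  have ab1: "1 / real m \<le> abundance F x \<and> abundance F x \<le> 2 / real m" if x: "x \<in> {1..n} - TT" for x
  proof -
    have "real (card {A \<in> F. x \<in> A}) = (q + 1) ^ (m - 1)"
      using count_nonT[of x] x unfolding FF q_def by (simp add: add.commute)
    then have "abundance F x = (q + 1) ^ (m - 1) / ((q + 1) ^ m - q ^ m)"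
      unfolding abundance_def using cardF by simp
    then show ?thesis using I by simp
  qed
  have ab2: "1 / 2 \<le> abundance F x \<and> abundance F x \<le> 1" if x: "x \<in> TT" for x
  proof -
    have fin: "finite F" using Fc_fin FF by simp
    have part: "card F = card {A \<in> F. x \<in> A} + card {A \<in> F. x \<notin> A}"
    proof -
      have "F = {A \<in> F. x \<in> A} \<union> {A \<in> F. x \<notin> A}" by blast
      moreover have "{A \<in> F. x \<in> A} \<inter> {A \<in> F. x \<notin> A} = {}" by blast
      ultimately show ?thesis using fin card_Un_disjoint[of "{A \<in> F. x \<in> A}" "{A \<in> F. x \<notin> A}"]
        by (metis (no_types, lifting) finite_Un)
    qed
    have le: "card {A \<in> F. x \<notin> A} \<le> card {A \<in> F. x \<in> A}" using count_T[OF x] FF by simp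
    have le2: "card {A \<in> F. x \<in> A} \<le> card F" using fin by (intro card_mono) auto
    have "real (card F) \<le> 2 * real (card {A \<in> F. x \<in> A})" using part le by simp
    then have "1 / 2 \<le> real (card {A \<in> F. x \<in> A}) / real (card F)"
      using Npos by (simp add: field_simps)
    moreover have "real (card {A \<in> F. x \<in> A}) / real (card F) \<le> 1"
      using le2 Npos by (simp add: field_simps)
    ultimately show ?thesis unfolding abundance_def by simp
  qed
  have gl: "1 / real m \<le> abundance F x" if "x \<in> {1..n}" for x
  proof (cases "x \<in> TT")
    case True
    have "1 / real m \<le> 1 / 2" using assms(2) by (simp add: field_simps)
    then show ?thesis using ab2[OF True] by linarith
  next
    case False then show ?thesis using ab1 that by blast
  qed
  have FA: "A \<subseteq> {1..n} \<and> finite A \<and> k \<le> card A" if "A \<in> F" for A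
  proof -
    have A: "A \<in> Fc" using that FF by simp
    have Asub: "A \<subseteq> {1..n}" and Aex: "\<exists>i\<in>{1..m}. B i \<subseteq> A" using A unfolding Fc_def by auto
    have finA: "finite A" using Asub finite_subset by blast
    obtain i where i: "i \<in> {1..m}" "B i \<subseteq> A" using Aex by blast
    have "card (B i) \<le> card A" using card_mono[OF finA i(2)] .
    then show ?thesis using Asub finA cardB[OF i(1)] by simp
  qed
  have Fne: "F - {{}} = F"
  proof -
    have "{} \<notin> F" using FA assms(1) by fastforce
    then show ?thesis by simp
  qed
  have AODeq: "AOD F = (1 / real (card F)) * (\<Sum>A\<in>F. (1 / real (card A)) * (\<Sum>x\<in>A. abundance F x))"
    unfolding AOD_def Fne ..
  have lowA: "1 / real m \<le> (1 / real (card A)) * (\<Sum>x\<in>A. abundance F x)" if A: "A \<in> F" for A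
  proof -
    have cA: "0 < real (card A)" using FA[OF A] assms(1) by simp
    have "real (card A) * (1 / real m) \<le> (\<Sum>x\<in>A. abundance F x)"
      using sum_bounded_below[of A "1 / real m" "abundance F"] gl FA[OF A] by (auto simp: subset_iff)
    then show ?thesis using cA by (simp add: field_simps)
  qed
  have upA: "(1 / real (card A)) * (\<Sum>x\<in>A. abundance F x) \<le> 2 / real m + real m ^ 2 * real s / real n"
    if A: "A \<in> F" for A
  proof -
    have finA: "finite A" and kA: "k \<le> card A" and Asub: "A \<subseteq> {1..n}" using FA[OF A] by auto
    have cA: "0 < real (card A)" using kA assms(1) by simp
    have s1: "(\<Sum>x\<in>A. abundance F x) = (\<Sum>x\<in>A \<inter> TT. abundance F x) + (\<Sum>x\<in>A - TT. abundance F x)"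
      using finA by (rule sum.Int_Diff)
    have s2: "(\<Sum>x\<in>A \<inter> TT. abundance F x) \<le> real (card (A \<inter> TT)) * 1"
      using sum_bounded_above[of "A \<inter> TT" "abundance F" 1] ab2 by auto
    have s3: "(\<Sum>x\<in>A - TT. abundance F x) \<le> real (card (A - TT)) * (2 / real m)"
    proof (rule sum_bounded_above)
      fix x assume "x \<in> A - TT"
      then have "x \<in> {1..n} - TT" using Asub by blast
      then show "abundance F x \<le> 2 / real m" using ab1 by blast
    qed
    have "real (card (A - TT)) \<le> real (card A)" using finA by (simp add: card_mono)
    then have s4: "real (card (A - TT)) * (2 / real m) \<le> real (card A) * (2 / real m)"
      using mpos by (intro mult_right_mono) auto
    have S: "(\<Sum>x\<in>A. abundance F x) \<le> real (card (A \<inter> TT)) + real (card A) * (2 / real m)"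
      using s1 s2 s3 s4 by linarith
    have "card (A \<inter> TT) \<le> card TT" using finite_subset[OF _ finite_atLeastAtMost] TT_sub
      by (intro card_mono) auto
    then have ct: "real (card (A \<inter> TT)) \<le> real m * real s" using card_TT
      by (metis of_nat_le_iff of_nat_mult order_trans)
    have "(1 / real (card A)) * (\<Sum>x\<in>A. abundance F x)
        \<le> (1 / real (card A)) * (real (card (A \<inter> TT)) + real (card A) * (2 / real m))"
      using S cA by (intro mult_left_mono) auto
    also have "\<dots> = real (card (A \<inter> TT)) / real (card A) + 2 / real m" using cA by (simp add: field_simps)
    also have "real (card (A \<inter> TT)) / real (card A) \<le> real m * real s / real k"
    proof -
      have "real (card (A \<inter> TT)) / real (card A) \<le> real m * real s / real (card A)"
        using ct cA by (simp add: divide_right_mono)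
      also have "\<dots> \<le> real m * real s / real k" using kA assms(1)
        by (intro divide_left_mono) auto
      finally show ?thesis .
    qed
    also have "real m * real s / real k = real m ^ 2 * real s / real n"
      using assms(6) mpos by (simp add: field_simps power2_eq_square)
    finally show ?thesis by simp
  qed
  have "real (card F) * (1 / real m) \<le> (\<Sum>A\<in>F. (1 / real (card A)) * (\<Sum>x\<in>A. abundance F x))"
    using sum_bounded_below[of F "1 / real m"] lowA by auto
  then have L: "1 / real m \<le> AOD F" unfolding AODeq using Npos by (simp add: field_simps)
  have "(\<Sum>A\<in>F. (1 / real (card A)) * (\<Sum>x\<in>A. abundance F x)) \<le> real (card F) * (2 / real m + real m ^ 2 * real s / real n)"
    using sum_bounded_above[of F _ "2 / real m + real m ^ 2 * real s / real n"] upA by auto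
  then have U: "AOD F \<le> 2 / real m + real m ^ 2 * real s / real n" unfolding AODeq using Npos
    by (simp add: field_simps)
  show ?thesis using ab1 ab2 L U by blast
qed

end
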